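(* Assume that $n = 2$. Then for any $k \ge 0$ (and any $\ell \in \mathbb{N}$), the following formula holds in $V_2$: \begin{equation*} (r + k,\ell) = \sum_{s=1}^r(-1)^{s-1} \begin{bmatrix} s + k - 1 \\ s -1 \end{bmatrix} \begin{bmatrix} r + k \\ r - s \end{bmatrix}(r - s, \ell + s + k). \end{equation*}
   Context: Let $q$ be an indeterminate, $[n] = \frac{q^n - q^{-n}}{q - q^{-1}}$ for $n \in \mathbb{Z}$, $[m]^! = [1][2]\cdots[m]$, and for $n \in \mathbb{Z}$, $m \in \mathbb{N}$, $\begin{bmatrix} n \\ m\end{bmatrix} = \frac{[n][n-1]\cdots[n-m+1]}{[m]^!}$ for $m \ge 1$, $\begin{bmatrix} n \\ 0\end{bmatrix} = 1$. Fix an integer $r \ge 2$. Let $V_n$ be the vector space over $\mathbb{Q}(q)$ spanned by symbols $a = (a_1, \dots, a_n) \in \mathbb{N}^n$ subject to the following relations: for $1 \le i \le n-1$, if $a_i \ge r$ then $\sum_{0 \le j \le r}(-1)^j\begin{bmatrix} r \\ j\end{bmatrix} a(j) = 0$, where $a(j) = (a_1, \dots, a_{i-1}, a_i - j, a_{i+1} + j, a_{i+2}, \dots, a_n)$ (so $a(0) = a$). In particular for $n = 2$ the relation reads $\sum_{j=0}^r (-1)^j\begin{bmatrix} r \\ j\end{bmatrix}(a_1 - j, a_2 + j) = 0$ whenever $a_1 \ge r$. *)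

theory Defs
  imports "HOL-Computational_Algebra.Computational_Algebra"
begin

type_synonym qfield = "rat poly fract"

definition qq :: qfield where
  "qq = Fract [:0, 1:] 1"

definition qint :: "int \<Rightarrow> qfield" where
  "qint n = (qq powi n - qq powi (- n)) / (qq - inverse qq)"

definition qfact :: "nat \<Rightarrow> qfield" where
  "qfact m = (\<Prod>i\<in>{1..m}. qint (int i))"

definition qbinom :: "int \<Rightarrow> nat \<Rightarrow> qfield" where
  "qbinom n m = (\<Prod>i<m. qint (n - int i)) / qfact m"

text \<open>Free vector space on symbols (a_1,...,a_n) (lists of naturals): elements are
  functions from symbols to coefficients (finite support throughout below).
  The basis vector of a symbol a:\<close>
definition vsym :: "nat list \<Rightarrow> nat list \<Rightarrow> qfield" where
  "vsym a = (\<lambda>b. if b = a then 1 else 0)"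

text \<open>a(j) at position i (0-based: positions i, i+1).\<close>
definition shift :: "nat list \<Rightarrow> nat \<Rightarrow> nat \<Rightarrow> nat list" where
  "shift a i j = a[i := a ! i - j, Suc i := a ! Suc i + j]"

definition relvec :: "nat \<Rightarrow> nat list \<Rightarrow> nat \<Rightarrow> nat list \<Rightarrow> qfield" where
  "relvec r a i = (\<lambda>b. \<Sum>j\<le>r. (-1) ^ j * qbinom (int r) j * vsym (shift a i j) b)"

inductive_set relspan :: "nat \<Rightarrow> nat \<Rightarrow> (nat list \<Rightarrow> qfield) set" for r n where
  zero: "(\<lambda>b. 0) \<in> relspan r n"
| rel: "\<lbrakk>length a = n; Suc i < n; r \<le> a ! i\<rbrakk> \<Longrightarrow> relvec r a i \<in> relspan r n"
| add: "\<lbrakk>v \<in> relspan r n; w \<in> relspan r n\<rbrakk> \<Longrightarrow> (\<lambda>b. v b + w b) \<in> relspan r n"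
| smult: "v \<in> relspan r n \<Longrightarrow> (\<lambda>b. c * v b) \<in> relspan r n"

text \<open>Equality in V_n = quotient of the free space by the relation span.\<close>
definition Veq :: "nat \<Rightarrow> nat \<Rightarrow> (nat list \<Rightarrow> qfield) \<Rightarrow> (nat list \<Rightarrow> qfield) \<Rightarrow> bool" where
  "Veq r n v w \<longleftrightarrow> (\<lambda>b. v b - w b) \<in> relspan r n"

end

theory Submission
  imports Defs
begin


lemma qq_pow: "qq ^ n = Fract ([:0,1:] ^ n) 1"
  by (induction n) (simp_all add: qq_def One_fract_def)

lemma qq_nz: "qq \<noteq> 0"
  by (simp add: qq_def Zero_fract_def eq_fract)

lemma qq_pow_ne1: "n > 0 \<Longrightarrow> qq ^ n \<noteq> 1"
proof
  assume n: "n > 0" and h: "qq ^ n = 1"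
  have "([:0,1:] :: rat poly) ^ n = 1"
    using h by (simp add: qq_pow One_fract_def eq_fract)
  hence "degree (([:0,1:] :: rat poly) ^ n) = 0" by simp
  moreover have "degree (([:0,1:] :: rat poly) ^ n) = n"
    by (simp add: degree_power_eq)
  ultimately show False using n by simp
qed

lemma qint_nz: assumes "n > 0" shows "qint (int n) \<noteq> 0"
proof -
  have d: "qq - inverse qq \<noteq> 0"
  proof
    assume "qq - inverse qq = 0"
    hence "qq * qq = 1" using qq_nz by (simp add: field_simps)
    thus False using qq_pow_ne1[of 2] by (simp add: power2_eq_square)
  qed
  have "qq ^ n - inverse (qq ^ n) \<noteq> 0"
  proof
    assume "qq ^ n - inverse (qq ^ n) = 0"
    hence "qq ^ n * qq ^ n = 1" using qq_nz by (simp add: field_simps)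
    hence "qq ^ (2*n) = 1" by (simp add: power_add[symmetric] mult_2)
    thus False using qq_pow_ne1[of "2*n"] assms by simp
  qed
  thus ?thesis using d by (simp add: qint_def power_int_minus)
qed

lemma qint_id: "qint (r + m) * qint s + qint m * qint (r - s) = qint r * qint (s + m)"
proof -
  have e: "qq powi (a + b) = qq powi a * qq powi b" for a b
    using qq_nz by (simp add: power_int_add)
  have e2: "qq powi (a - b) = qq powi a * inverse (qq powi b)" for a b
    using e[of a "-b"] by (simp add: power_int_minus)
  define u where "u = qq powi r"
  define v where "v = qq powi s"
  define w where "w = qq powi m"
  define d where "d = qq - inverse qq"
  have nz: "u \<noteq> 0" "v \<noteq> 0" "w \<noteq> 0" using qq_nz by (auto simp: u_def v_def w_def)
  show ?thesis
    unfolding qint_def power_int_minus e e2 u_def[symmetric] v_def[symmetric] w_def[symmetric] d_def[symmetric]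
    using nz apply (simp add: field_simps)
    apply (subst add_divide_distrib[symmetric])
    apply (rule arg_cong[where f="\<lambda>x. x / _"])
    by (simp add: algebra_simps)
qed

lemma qfact_Suc: "qfact (Suc n) = qfact n * qint (int (Suc n))"
  unfolding qfact_def by (simp add: prod.nat_ivl_Suc')

lemma qfact_nz: "qfact n \<noteq> 0"
  unfolding qfact_def using qint_nz by auto

lemma qfact_split: "m \<le> n \<Longrightarrow> qfact n = qfact (n - m) * (\<Prod>i<m. qint (int n - int i))"
proof (induction m)
  case 0 then show ?case by simp
next
  case (Suc m)
  have "qfact (n - m) = qfact (n - Suc m) * qint (int n - int m)"
    using Suc.prems qfact_Suc[of "n - Suc m"] by (simp add: Suc_diff_Suc of_nat_diff)
  then show ?case using Suc by (simp add: mult.assoc)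
qed

lemma qbinom_nat: "m \<le> n \<Longrightarrow> qbinom (int n) m = qfact n / (qfact m * qfact (n - m))"
  unfolding qbinom_def using qfact_split[of m n] qfact_nz[of "n-m"] qfact_nz[of m]
  by (simp add: field_simps)


lemma qbinom_0: "qbinom n 0 = 1"
  by (simp add: qbinom_def qfact_def)

lemma qbinom_diag: "qbinom (int n) n = 1"
  using qfact_nz[of n] by (simp add: qbinom_nat qfact_def)

lemma qbinom_sym: "m \<le> n \<Longrightarrow> qbinom (int n) (n - m) = qbinom (int n) m"
  by (simp add: qbinom_nat mult.commute)

lemma core_field:
  fixes a b c e g h Ik1 It1 Is1 Isk2 Ir3 Ir2 :: "'a::field"
  assumes nz: "a \<noteq> 0" "b \<noteq> 0" "c \<noteq> 0" "e \<noteq> 0" "h \<noteq> 0" "Ik1 \<noteq> 0" "It1 \<noteq> 0" "Is1 \<noteq> 0" "Isk2 \<noteq> 0"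
    and hyp: "Ir3*Is1 + Ik1*It1 = Ir2*Isk2"
  shows "e/(a*(b*Ik1)) * ((g*Ir3)/((c*It1)*(e*Isk2))) + e/((a*Is1)*b) * (g/(c*(e*Isk2)))
       = (g/(h*(b*Ik1))) * ((h*Ir2)/((c*It1)*(a*Is1)))"
proof -
  have L: "e/(a*(b*Ik1)) * ((g*Ir3)/((c*It1)*(e*Isk2))) + e/((a*Is1)*b) * (g/(c*(e*Isk2)))
       = g*(Ir3*Is1 + Ik1*It1)/(a*b*c*Ik1*It1*Is1*Isk2)"
    using nz by (simp add: field_simps)
  have R: "(g/(h*(b*Ik1))) * ((h*Ir2)/((c*It1)*(a*Is1))) = g*(Ir2*Isk2)/(a*b*c*Ik1*It1*Is1*Isk2)"
    using nz by (simp add: field_simps)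
  show ?thesis unfolding L R hyp ..
qed

lemma core:
  "qbinom (int (s'+k+1)) s' * qbinom (int (s'+t+k+3)) (t+1)
   + qbinom (int (s'+k+1)) (s'+1) * qbinom (int (s'+t+k+2)) t
   = qbinom (int (s'+t+k+2)) (s'+t+1) * qbinom (int (s'+t+2)) (t+1)"
proof -
  have f1: "qfact (k+1) = qfact k * qint (int (k+1))" using qfact_Suc[of k] by simp
  have f2: "qfact (t+1) = qfact t * qint (int (t+1))" using qfact_Suc[of t] by simp
  have f3: "qfact (s'+1) = qfact s' * qint (int (s'+1))" using qfact_Suc[of s'] by simp
  have f4: "qfact (s'+k+2) = qfact (s'+k+1) * qint (int (s'+k+2))" using qfact_Suc[of "s'+k+1"] by simp
  have f5: "qfact (s'+t+k+3) = qfact (s'+t+k+2) * qint (int (s'+t+k+3))" proof - have e: "s'+t+k+3 = Suc (s'+t+k+2)" by simp show ?thesis by (simp only: e qfact_Suc) qed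
  have f6: "qfact (s'+t+2) = qfact (s'+t+1) * qint (int (s'+t+2))" using qfact_Suc[of "s'+t+1"] by simp
  have b1: "qbinom (int (s'+k+1)) s' = qfact (s'+k+1) / (qfact s' * (qfact k * qint (int (k+1))))"
    using qbinom_nat[of s' "s'+k+1"] f1 by (simp add: add.commute add.left_commute)
  have b2: "qbinom (int (s'+t+k+3)) (t+1) = (qfact (s'+t+k+2) * qint (int (s'+t+k+3))) /
       ((qfact t * qint (int (t+1))) * (qfact (s'+k+1) * qint (int (s'+k+2))))"
  proof -
    have "s'+t+k+3 - (t+1) = s'+k+2" by simp
    thus ?thesis using qbinom_nat[of "t+1" "s'+t+k+3"] f2 f4 f5 by simp
  qed
  have b3: "qbinom (int (s'+k+1)) (s'+1) = qfact (s'+k+1) / ((qfact s' * qint (int (s'+1))) * qfact k)"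
  proof -
    have "s'+k+1 - (s'+1) = k" by simp
    thus ?thesis using qbinom_nat[of "s'+1" "s'+k+1"] f3 by simp
  qed
  have b4: "qbinom (int (s'+t+k+2)) t = qfact (s'+t+k+2) / (qfact t * (qfact (s'+k+1) * qint (int (s'+k+2))))"
  proof -
    have "s'+t+k+2 - t = s'+k+2" by simp
    thus ?thesis using qbinom_nat[of "t" "s'+t+k+2"] f4 by simp
  qed
  have b5: "qbinom (int (s'+t+k+2)) (s'+t+1) = qfact (s'+t+k+2) / (qfact (s'+t+1) * (qfact k * qint (int (k+1))))"
  proof -
    have "s'+t+k+2 - (s'+t+1) = k+1" by simp
    thus ?thesis using qbinom_nat[of "s'+t+1" "s'+t+k+2"] f1 by simp
  qed
  have b6: "qbinom (int (s'+t+2)) (t+1) = (qfact (s'+t+1) * qint (int (s'+t+2))) /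
        ((qfact t * qint (int (t+1))) * (qfact s' * qint (int (s'+1))))"
  proof -
    have "s'+t+2 - (t+1) = s'+1" by simp
    thus ?thesis using qbinom_nat[of "t+1" "s'+t+2"] f2 f3 f6 by simp
  qed
  have hyp: "qint (int (s'+t+k+3)) * qint (int (s'+1)) + qint (int (k+1)) * qint (int (t+1))
     = qint (int (s'+t+2)) * qint (int (s'+k+2))"
  proof -
    have "qint (int (s'+t+2) + int (k+1)) * qint (int (s'+1)) + qint (int (k+1)) * qint (int (s'+t+2) - int (s'+1))
        = qint (int (s'+t+2)) * qint (int (s'+1) + int (k+1))" by (rule qint_id)
    moreover have "int (s'+t+2) + int (k+1) = int (s'+t+k+3)" "int (s'+t+2) - int (s'+1) = int (t+1)"
       "int (s'+1) + int (k+1) = int (s'+k+2)" by simp_all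
    ultimately show ?thesis by (simp add: ac_simps)
  qed
  show ?thesis unfolding b1 b2 b3 b4 b5 b6
    by (rule core_field[OF qfact_nz qfact_nz qfact_nz qfact_nz qfact_nz qint_nz qint_nz qint_nz qint_nz hyp]) simp_all
qed


definition cf :: "nat \<Rightarrow> nat \<Rightarrow> nat \<Rightarrow> qfield" where
  "cf r k s = (-1) ^ (s - 1) * qbinom (int (s + k - 1)) (s - 1) * qbinom (int (r + k)) (r - s)"

lemma cf_id:
  assumes "1 \<le> s" "s \<le> r"
  shows "cf r (Suc k) s = (if s < r then cf r k (Suc s) else 0) + cf r k 1 * cf r 0 s"
proof (cases "s < r")
  case False
  hence "s = r" using assms by simp
  moreover have "qbinom (int r - 1) (r - 1) = 1" using qbinom_diag[of "r-1"] assms by (simp add: of_nat_diff)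
  ultimately show ?thesis using assms by (simp add: cf_def qbinom_0 qbinom_diag)
next
  case True
  obtain s' where s': "s = s' + 1" using assms by (metis add.commute add_diff_inverse_nat less_one not_le)
  obtain t where t: "r = s' + t + 2" using True s' by (metis add.commute add_Suc_right add_diff_inverse_nat less_Suc_eq_0_disj add_2_eq_Suc' less_imp_Suc_add plus_1_eq_Suc Suc_eq_plus1 add.assoc)
  have c1: "cf r (Suc k) s = (-1)^s' * (qbinom (int (s'+k+1)) s' * qbinom (int (s'+t+k+3)) (t+1))"
    unfolding cf_def s' t by (simp add: ac_simps)
  have c2: "cf r k (Suc s) = - ((-1)^s' * (qbinom (int (s'+k+1)) (s'+1) * qbinom (int (s'+t+k+2)) t))"
    unfolding cf_def s' t by (simp add: ac_simps)
  have c3: "cf r k 1 * cf r 0 s = (-1)^s' * (qbinom (int (s'+t+k+2)) (s'+t+1) * qbinom (int (s'+t+2)) (t+1))"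
    unfolding cf_def s' t by (simp add: ac_simps qbinom_0 qbinom_diag)
  show ?thesis using True unfolding c1 c2 c3 core[of s' k t, symmetric] by (simp add: algebra_simps)
qed


lemma relspan_diff: "v \<in> relspan r n \<Longrightarrow> w \<in> relspan r n \<Longrightarrow> (\<lambda>b. v b - w b) \<in> relspan r n"
proof -
  assume v: "v \<in> relspan r n" and w: "w \<in> relspan r n"
  have "(\<lambda>b. v b + (-1) * w b) \<in> relspan r n" by (intro relspan.add v relspan.smult w)
  thus ?thesis by simp
qed

lemma Veq_trans: "Veq r n u v \<Longrightarrow> Veq r n v w \<Longrightarrow> Veq r n u w"
  unfolding Veq_def using relspan.add[of "\<lambda>b. u b - v b" r n "\<lambda>b. v b - w b"] by simp

lemma Veq_lin: "Veq r n v w \<Longrightarrow> Veq r n (\<lambda>b. c * v b + h b) (\<lambda>b. c * w b + h b)"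
  unfolding Veq_def using relspan.smult[of "\<lambda>b. v b - w b" r n c] by (simp add: algebra_simps)

definition Tsh :: "(nat list \<Rightarrow> qfield) \<Rightarrow> nat list \<Rightarrow> qfield" where
  "Tsh v b = (if length b = 2 \<and> b ! 0 \<ge> 1 then v [b ! 0 - 1, b ! 1] else 0)"

lemma len2: "length b = 2 \<Longrightarrow> b = [b ! 0, b ! 1]"
  by (cases b; cases "tl b") auto

lemma Tsh_vsym: "Tsh (vsym [x, y]) = vsym [Suc x, y]"
proof
  fix b
  show "Tsh (vsym [x, y]) b = vsym [Suc x, y] b"
  proof (cases "length b = 2 \<and> b ! 0 \<ge> 1")
    case True
    then have "b = [b ! 0, b ! 1]" using len2 by blast
    then show ?thesis using True unfolding Tsh_def vsym_def by (auto; metis Suc_pred' less_one not_le)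
  next
    case False
    then show ?thesis unfolding Tsh_def vsym_def by auto
  qed
qed

lemma Tsh_add: "Tsh (\<lambda>b. v b + w b) = (\<lambda>b. Tsh v b + Tsh w b)"
  unfolding Tsh_def by auto
lemma Tsh_smult: "Tsh (\<lambda>b. c * v b) = (\<lambda>b. c * Tsh v b)"
  unfolding Tsh_def by auto
lemma Tsh_diff: "Tsh (\<lambda>b. v b - w b) = (\<lambda>b. Tsh v b - Tsh w b)"
  unfolding Tsh_def by auto
lemma Tsh_zero: "Tsh (\<lambda>b. 0) = (\<lambda>b. 0)"
  unfolding Tsh_def by auto
lemma Tsh_sum: "Tsh (\<lambda>b. \<Sum>j\<in>A. f j b) = (\<lambda>b. \<Sum>j\<in>A. Tsh (f j) b)"
proof
  fix b show "Tsh (\<lambda>b. \<Sum>j\<in>A. f j b) b = (\<Sum>j\<in>A. Tsh (f j) b)"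
    unfolding Tsh_def by (cases "length b = 2"; cases "Suc 0 \<le> b ! 0") simp_all
qed

lemma Tsh_relvec:
  assumes "length a = 2" "r \<le> a ! 0"
  shows "Tsh (relvec r a 0) = relvec r [Suc (a ! 0), a ! 1] 0"
proof -
  have a: "a = [a ! 0, a ! 1]" using len2 assms by blast
  have "Tsh (relvec r a 0) = (\<lambda>b. \<Sum>j\<le>r. (-1) ^ j * qbinom (int r) j * Tsh (vsym (shift a 0 j)) b)"
    unfolding relvec_def Tsh_sum Tsh_smult ..
  also have "\<dots> = (\<lambda>b. \<Sum>j\<le>r. (-1) ^ j * qbinom (int r) j * vsym (shift [Suc (a ! 0), a ! 1] 0 j) b)"
  proof (intro ext sum.cong refl)
    fix b j assume "j \<in> {..r}"
    hence j: "j \<le> a ! 0" using assms by simp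
    obtain x y where xy: "a = [x, y]" using a by blast
    have "shift a 0 j = [a ! 0 - j, a ! 1 + j]" unfolding shift_def xy by simp
    moreover have "shift [Suc (a ! 0), a ! 1] 0 j = [Suc (a ! 0 - j), a ! 1 + j]"
      unfolding shift_def using j by (simp add: Suc_diff_le)
    ultimately show "(-1) ^ j * qbinom (int r) j * Tsh (vsym (shift a 0 j)) b =
        (-1) ^ j * qbinom (int r) j * vsym (shift [Suc (a ! 0), a ! 1] 0 j) b"
      by (simp add: Tsh_vsym)
  qed
  finally show ?thesis unfolding relvec_def .
qed

lemma relspan_Tsh: "v \<in> relspan r 2 \<Longrightarrow> Tsh v \<in> relspan r 2"
proof (induction rule: relspan.induct)
  case zero
  then show ?case unfolding Tsh_zero by (rule relspan.zero)
next
  case (rel a i)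
  then have i: "i = 0" by simp
  have "relvec r [Suc (a ! 0), a ! 1] 0 \<in> relspan r 2"
    by (rule relspan.rel) (use rel i in auto)
  then show ?case using Tsh_relvec[of a r] rel i by simp
next
  case (add v w)
  then show ?case by (simp add: Tsh_add relspan.add)
next
  case (smult v c)
  then show ?case by (simp add: Tsh_smult relspan.smult)
qed

lemma Veq_Tsh: "Veq r 2 v w \<Longrightarrow> Veq r 2 (Tsh v) (Tsh w)"
  unfolding Veq_def using relspan_Tsh by (fastforce simp: Tsh_diff[symmetric])


lemma base:
  assumes "r \<ge> 1"
  shows "Veq r 2 (vsym [r, l]) (\<lambda>b. \<Sum>s = 1..r. cf r 0 s * vsym [r - s, l + s + 0] b)"
proof -
  have R: "relvec r [r, l] 0 \<in> relspan r 2" by (rule relspan.rel) auto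
  have "relvec r [r, l] 0 = (\<lambda>b. vsym [r, l] b - (\<Sum>s = 1..r. cf r 0 s * vsym [r - s, l + s + 0] b))"
  proof
    fix b
    have sh: "shift [r, l] 0 j = [r - j, l + j]" for j by (simp add: shift_def)
    have "relvec r [r, l] 0 b = (\<Sum>j\<in>insert 0 {1..r}. (-1) ^ j * qbinom (int r) j * vsym [r - j, l + j] b)"
      unfolding relvec_def sh by (rule sum.cong) auto
    also have "\<dots> = vsym [r, l] b + (\<Sum>j = 1..r. (-1) ^ j * qbinom (int r) j * vsym [r - j, l + j] b)"
      by (simp add: qbinom_0)
    also have "(\<Sum>j = 1..r. (-1) ^ j * qbinom (int r) j * vsym [r - j, l + j] b)
        = - (\<Sum>s = 1..r. cf r 0 s * vsym [r - s, l + s + 0] b)"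
      unfolding sum_negf[symmetric]
    proof (rule sum.cong[OF refl])
      fix s assume s: "s \<in> {1..r}"
      have "qbinom (int s - 1) (s - 1) = 1" using qbinom_diag[of "s-1"] s by (simp add: of_nat_diff)
      moreover have "(-1::qfield) ^ s = - ((-1) ^ (s - 1))" 
      proof -
        obtain u where "s = Suc u" using s by (cases s) auto
        thus ?thesis by simp
      qed
      moreover have "qbinom (int r) (r - s) = qbinom (int r) s" using s by (simp add: qbinom_sym)
      ultimately show "(-1) ^ s * qbinom (int r) s * vsym [r - s, l + s] b = - (cf r 0 s * vsym [r - s, l + s + 0] b)"
        using s by (simp add: cf_def)
    qed
    finally show "relvec r [r, l] 0 b = vsym [r, l] b - (\<Sum>s = 1..r. cf r 0 s * vsym [r - s, l + s + 0] b)"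
      by simp
  qed
  then show ?thesis using R unfolding Veq_def by simp
qed


lemma main:
  assumes r: "r \<ge> 1"
  shows "Veq r 2 (vsym [r + k, l]) (\<lambda>b. \<Sum>s = 1..r. cf r k s * vsym [r - s, l + s + k] b)"
proof (induction k arbitrary: l)
  case 0
  then show ?case using base[OF r, of l] by simp
next
  case (Suc k)
  define V where "V b s = vsym [r - s, l + s + Suc k] b" for b s
  define H where "H b = (\<Sum>s = 1..r - 1. cf r k (Suc s) * V b s)" for b
  define F0 where "F0 b = (\<Sum>s = 1..r. cf r 0 s * vsym [r - s, l + Suc k + s + 0] b)" for b
  have A0: "Veq r 2 (Tsh (vsym [r + k, l])) (Tsh (\<lambda>b. \<Sum>s = 1..r. cf r k s * vsym [r - s, l + s + k] b))"
    by (rule Veq_Tsh[OF Suc.IH])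
  have A1: "Tsh (vsym [r + k, l]) = vsym [r + Suc k, l]" by (simp add: Tsh_vsym)
  have A2: "Tsh (\<lambda>b. \<Sum>s = 1..r. cf r k s * vsym [r - s, l + s + k] b)
      = (\<lambda>b. cf r k 1 * vsym [r, l + Suc k] b + H b)"
  proof
    fix b
    have "Tsh (\<lambda>b. \<Sum>s = 1..r. cf r k s * vsym [r - s, l + s + k] b) b
        = (\<Sum>s = 1..r. cf r k s * vsym [Suc (r - s), l + s + k] b)"
      unfolding Tsh_sum Tsh_smult Tsh_vsym ..
    also have "\<dots> = cf r k 1 * vsym [Suc (r - 1), l + 1 + k] b
        + (\<Sum>s = Suc 1..Suc (r - 1). cf r k s * vsym [Suc (r - s), l + s + k] b)"
      using r by (simp add: sum.atLeast_Suc_atMost)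
    also have "(\<Sum>s = Suc 1..Suc (r - 1). cf r k s * vsym [Suc (r - s), l + s + k] b) = H b"
      unfolding sum.shift_bounds_cl_Suc_ivl H_def V_def
      by (rule sum.cong) (auto simp: Suc_diff_Suc)
    finally show "Tsh (\<lambda>b. \<Sum>s = 1..r. cf r k s * vsym [r - s, l + s + k] b) b
        = cf r k 1 * vsym [r, l + Suc k] b + H b" using r by simp
  qed
  have B: "Veq r 2 (\<lambda>b. cf r k 1 * vsym [r, l + Suc k] b + H b) (\<lambda>b. cf r k 1 * F0 b + H b)"
    unfolding F0_def by (rule Veq_lin[OF base[OF r]])
  have C: "(\<lambda>b. cf r k 1 * F0 b + H b) = (\<lambda>b. \<Sum>s = 1..r. cf r (Suc k) s * vsym [r - s, l + s + Suc k] b)"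
  proof
    fix b
    have "(\<Sum>s = 1..r. cf r (Suc k) s * vsym [r - s, l + s + Suc k] b)
       = (\<Sum>s = 1..r. (if s < r then cf r k (Suc s) else 0) * V b s) + (\<Sum>s = 1..r. cf r k 1 * (cf r 0 s * V b s))"
      unfolding sum.distrib[symmetric] V_def
      by (rule sum.cong[OF refl]) (simp add: cf_id distrib_right)
    also have "(\<Sum>s = 1..r. (if s < r then cf r k (Suc s) else 0) * V b s) = H b"
    proof -
      have "(\<Sum>s = 1..Suc (r - 1). (if s < r then cf r k (Suc s) else 0) * V b s)
          = (\<Sum>s = 1..r - 1. (if s < r then cf r k (Suc s) else 0) * V b s)"
      proof -
        obtain r' where rr: "r = Suc r'" using r by (cases r) auto
        show ?thesis unfolding rr by (simp add: sum.cl_ivl_Suc)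
      qed
      also have "\<dots> = H b" unfolding H_def by (rule sum.cong) auto
      finally show ?thesis using r by simp
    qed
    also have "(\<Sum>s = 1..r. cf r k 1 * (cf r 0 s * V b s)) = cf r k 1 * F0 b"
      unfolding F0_def V_def sum_distrib_left by (rule sum.cong) (auto simp: ac_simps)
    finally show "cf r k 1 * F0 b + H b = (\<Sum>s = 1..r. cf r (Suc k) s * vsym [r - s, l + s + Suc k] b)"
      by simp
  qed
  show ?case using Veq_trans[OF A0[unfolded A1 A2] B] unfolding C .
qed


theorem proposition5p4:
  fixes r k l :: nat
  assumes "r \<ge> 2"
  shows "Veq r 2 (vsym [r + k, l])
           (\<lambda>b. \<Sum>s = 1..r. (-1) ^ (s - 1) * qbinom (int (s + k - 1)) (s - 1)
                      * qbinom (int (r + k)) (r - s) * vsym [r - s, l + s + k] b)"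
  using main[of r k l] assms unfolding cf_def by simp

end
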